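(* Let $X=\{x=(x_{i,j,k})\in\mathbb{F}_2^{\mathbb{Z}^3}: x_{i,j,k}+x_{i+1,j,k}+x_{i,j+1,k}=0\text{ for all }(i,j,k)\in\mathbb{Z}^3\}$ and let $\alpha$ be the $\mathbb{Z}^3$-action on $X$ by shifts, $(\alpha^{\mathbf{n}}x)_{\mathbf{m}}=x_{\mathbf{m}+\mathbf{n}}$. Then the upper growth rate of periodic points is $\mathsf{g}(\alpha)=\frac23\log2$; in particular $\zeta_\alpha$ has radius of convergence $2^{-2/3}$.
   Context: $\mathcal{L}_3$ is the set of finite-index subgroups of $\mathbb{Z}^3$, $[\Lambda]=|\mathbb{Z}^3/\Lambda|$, $\mathsf{F}_\alpha(\Lambda)$ is the number of $x\in X$ fixed by all $\alpha^{\mathbf{n}}$, $\mathbf{n}\in\Lambda$, $\mathsf{g}(\alpha)=\limsup_{[\Lambda]\to\infty}\frac{1}{[\Lambda]}\log\mathsf{F}_\alpha(\Lambda)$, and $\zeta_\alpha(z)=\exp\left(\sum_{\Lambda\in\mathcal{L}_3}\frac{\mathsf{F}_\alpha(\Lambda)}{[\Lambda]}z^{[\Lambda]}\right)$. *)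

theory Defs
  imports "HOL-Analysis.Analysis" "HOL-Library.Z2" "HOL-Library.Product_Plus"
    "HOL-Computational_Algebra.Formal_Power_Series"
begin

text \<open>Points of Z^3 are triples of integers; F_2 is the library field bit.\<close>
type_synonym pt = "int \<times> int \<times> int"

definition is_subgroup3 :: "pt set \<Rightarrow> bool" where
  "is_subgroup3 L \<longleftrightarrow> 0 \<in> L \<and> (\<forall>a\<in>L. \<forall>b\<in>L. a + b \<in> L) \<and> (\<forall>a\<in>L. - a \<in> L)"

definition cosets3 :: "pt set \<Rightarrow> pt set set" where
  "cosets3 L = range (\<lambda>v. (\<lambda>l. v + l) ` L)"

definition L3 :: "pt set set" where
  "L3 = {L. is_subgroup3 L \<and> finite (cosets3 L)}"

definition idx :: "pt set \<Rightarrow> nat" where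
  "idx L = card (cosets3 L)"

definition Xsys :: "(pt \<Rightarrow> bit) set" where
  "Xsys = {x. \<forall>i j k. x (i,j,k) + x (i+1,j,k) + x (i,j+1,k) = 0}"

definition shift :: "pt \<Rightarrow> (pt \<Rightarrow> bit) \<Rightarrow> (pt \<Rightarrow> bit)" where
  "shift n x = (\<lambda>m. x (m + n))"

definition Fix :: "pt set \<Rightarrow> nat" where
  "Fix L = card {x \<in> Xsys. \<forall>n\<in>L. shift n x = x}"

text \<open>The filter "[L] \<rightarrow> \<infinity>" on L_3.\<close>
definition index_filter :: "pt set filter" where
  "index_filter = (INF N. principal {L \<in> L3. N \<le> idx L})"

definition growth :: ereal where
  "growth = Limsup index_filter (\<lambda>L. ereal (ln (real (Fix L)) / real (idx L)))"

text \<open>zeta = exp(A(z)) with A(z) = sum over L in L_3 of Fix L / [L] z^[L], as formal power series.\<close>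
definition logzeta_fps :: "real fps" where
  "logzeta_fps = Abs_fps (\<lambda>n. \<Sum>L\<in>{L\<in>L3. idx L = n}. real (Fix L) / real (idx L))"

definition zeta_fps :: "real fps" where
  "zeta_fps = fps_exp 1 oo logzeta_fps"

end

theory Submission
  imports Defs "HOL-Real_Asymp.Real_Asymp"
begin


definition smul :: "int \<Rightarrow> pt \<Rightarrow> pt" where
  "smul c v = (c * fst v, c * fst (snd v), c * snd (snd v))"

definition coset :: "pt \<Rightarrow> pt set \<Rightarrow> pt set" where
  "coset v L = (\<lambda>l. v + l) ` L"

lemma cosets3_coset: "cosets3 L = range (\<lambda>v. coset v L)"
  by (simp add: cosets3_def coset_def)

context fixes L assumes sg: "is_subgroup3 L"
begin
lemma sg_zero: "0 \<in> L" using sg by (simp add: is_subgroup3_def)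
lemma sg_add: "a \<in> L \<Longrightarrow> b \<in> L \<Longrightarrow> a + b \<in> L" using sg by (simp add: is_subgroup3_def)
lemma sg_neg: "a \<in> L \<Longrightarrow> - a \<in> L" using sg by (simp add: is_subgroup3_def)
lemma sg_diff: "a \<in> L \<Longrightarrow> b \<in> L \<Longrightarrow> a - b \<in> L"
  using sg_add[of a "-b"] sg_neg[of b] by simp

lemma sg_smul_nat: "v \<in> L \<Longrightarrow> smul (int k) v \<in> L"
proof (induction k)
  case 0 then show ?case using sg_zero by (simp add: smul_def zero_prod_def)
next
  case (Suc k)
  have "smul (int (Suc k)) v = smul (int k) v + v"
    by (cases v) (simp add: smul_def algebra_simps)
  then show ?case using Suc sg_add by simp
qed

lemma sg_smul: assumes "v \<in> L" shows "smul c v \<in> L"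
proof (cases "c \<ge> 0")
  case True then show ?thesis using sg_smul_nat[OF assms, of "nat c"] by simp
next
  case False
  have "smul c v = - smul (int (nat (-c))) v" using False
    by (cases v) (simp add: smul_def)
  show ?thesis unfolding \<open>smul c v = - smul (int (nat (-c))) v\<close>
    by (rule sg_neg[OF sg_smul_nat[OF assms]])
qed

lemma coset_eq_imp: "coset v L = coset w L \<Longrightarrow> v - w \<in> L"
proof -
  assume "coset v L = coset w L"
  moreover have "v \<in> coset v L" using sg_zero unfolding coset_def by force
  ultimately obtain l where "l \<in> L" "v = w + l" unfolding coset_def by auto
  then show ?thesis by (simp add: algebra_simps)
qed

lemma coset_eqI: assumes "v - w \<in> L" shows "coset v L = coset w L"
proof
  show "coset v L \<subseteq> coset w L"
  proof
    fix x assume "x \<in> coset v L"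
    then obtain l where l: "l \<in> L" "x = v + l" unfolding coset_def by auto
    then have "x = w + ((v - w) + l)" by (simp add: algebra_simps)
    then show "x \<in> coset w L" using sg_add[OF assms l(1)] unfolding coset_def by blast
  qed
next
  show "coset w L \<subseteq> coset v L"
  proof
    fix x assume "x \<in> coset w L"
    then obtain l where l: "l \<in> L" "x = w + l" unfolding coset_def by auto
    then have "x = v + (- (v - w) + l)" by (simp add: algebra_simps)
    then show "x \<in> coset v L" using sg_add[OF sg_neg[OF assms] l(1)] unfolding coset_def by blast
  qed
qed
end

lemma L3_sg: "L \<in> L3 \<Longrightarrow> is_subgroup3 L" by (simp add: L3_def)
lemma L3_fin: "L \<in> L3 \<Longrightarrow> finite (cosets3 L)" by (simp add: L3_def)

lemma L3_mult_exists:
  assumes L: "L \<in> L3"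
  shows "\<exists>k>0. smul (int k) u \<in> L"
proof -
  have sg: "is_subgroup3 L" using L3_sg[OF L] .
  define n where "n = idx L"
  define f where "f = (\<lambda>k::nat. coset (smul (int k) u) L)"
  have sub: "f ` {0..n} \<subseteq> cosets3 L" unfolding f_def cosets3_coset by auto
  have "\<not> inj_on f {0..n}"
  proof
    assume "inj_on f {0..n}"
    from card_inj_on_le[OF this sub L3_fin[OF L]] show False
      by (simp add: n_def idx_def)
  qed
  then obtain k1 k2 where k: "k1 \<noteq> k2" "f k1 = f k2" unfolding inj_on_def by auto
  then have d: "smul (int k1) u - smul (int k2) u \<in> L"
    using coset_eq_imp[OF sg] unfolding f_def by blast
  show ?thesis
  proof (cases "k1 > k2")
    case True
    have "smul (int (k1 - k2)) u = smul (int k1) u - smul (int k2) u"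
      using True by (cases u) (simp add: smul_def algebra_simps of_nat_diff)
    then show ?thesis using True d by (intro exI[of _ "k1-k2"]) auto
  next
    case False
    then have "k2 > k1" using k by auto
    have "smul (int (k2 - k1)) u = - (smul (int k1) u - smul (int k2) u)"
      using \<open>k2>k1\<close> by (cases u) (simp add: smul_def algebra_simps of_nat_diff)
    then show ?thesis using \<open>k2>k1\<close> sg_neg[OF sg d] by (intro exI[of _ "k2-k1"]) auto
  qed
qed



lemma smul_simp[simp]: "smul c (a,b,d) = (c*a, c*b, c*d)" by (simp add: smul_def)

lemma least_ex: "\<exists>n::nat. P n \<Longrightarrow> \<exists>n. P n \<and> (\<forall>k<n. \<not> P k)"
  using exists_least_iff by blast

lemma L3_gens:
  assumes L: "L \<in> L3"
  obtains m r q :: nat and a2 a3 b3 :: int where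
  "m>0" "r>0" "q>0" "(int m,0,0)\<in>L" "(a2,int r,0)\<in>L" "(a3,b3,int q)\<in>L"
  "0 \<le> a2" "a2 < int m" "0 \<le> a3" "a3 < int m" "0\<le>b3" "b3< int r"
  "\<forall>k a b. 0<k \<longrightarrow> k<m \<longrightarrow> (int k,a,b)\<in>L \<longrightarrow> a = 0 \<longrightarrow> b = 0 \<longrightarrow> False"
  "\<forall>k a b. 0<k \<longrightarrow> k<r \<longrightarrow> (a,int k,b)\<in>L \<longrightarrow> b = 0 \<longrightarrow> False"
  "\<forall>k a b. 0<k \<longrightarrow> k<q \<longrightarrow> (a,b,int k)\<in>L \<longrightarrow> False"
proof -
  have sg: "is_subgroup3 L" using L3_sg[OF L] .
  obtain k1 where k1: "k1>0" "smul (int k1) (1,0,0) \<in> L" using L3_mult_exists[OF L] by blast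
  obtain k2 where k2: "k2>0" "smul (int k2) (0,1,0) \<in> L" using L3_mult_exists[OF L] by blast
  obtain k3 where k3: "k3>0" "smul (int k3) (0,0,1) \<in> L" using L3_mult_exists[OF L] by blast
  have e1: "\<exists>n. n>0 \<and> (int n,0,0)\<in>L" using k1 by (intro exI[of _ k1]) simp
  obtain m where m: "m>0 \<and> (int m,0,0)\<in>L" "\<forall>k<m. \<not>(k>0 \<and> (int k,0,0)\<in>L)"
    using least_ex[OF e1] by blast
  have e2: "\<exists>n. n>0 \<and> (\<exists>a. (a,int n,0)\<in>L)" using k2 by (intro exI[of _ k2]) auto
  obtain r where r: "r>0 \<and> (\<exists>a. (a,int r,0)\<in>L)" "\<forall>k<r. \<not>(k>0 \<and> (\<exists>a. (a,int k,0)\<in>L))"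
    using least_ex[OF e2] by blast
  have e3: "\<exists>n. n>0 \<and> (\<exists>a b. (a,b,int n)\<in>L)" using k3 by (intro exI[of _ k3]) auto
  obtain q where q: "q>0 \<and> (\<exists>a b. (a,b,int q)\<in>L)" "\<forall>k<q. \<not>(k>0 \<and> (\<exists>a b. (a,b,int k)\<in>L))"
    using least_ex[OF e3] by blast
  obtain a where a: "(a,int r,0)\<in>L" using r by auto
  obtain c d where cd: "(c,d,int q)\<in>L" using q by auto
  define a2 where "a2 = a mod int m"
  have a2L: "(a2, int r, 0) \<in> L"
  proof -
    have "(a2, int r, 0) = (a,int r,0) - smul (a div int m) (int m,0,0)"
      by (simp add: a2_def minus_div_mult_eq_mod[symmetric] algebra_simps)
    then show ?thesis using sg_diff[OF sg a sg_smul[OF sg m(1)[THEN conjunct2]]] by simp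
  qed
  define b3 where "b3 = d mod int r"
  define c' where "c' = c - (d div int r) * a2"
  have 1: "(c', b3, int q) \<in> L"
  proof -
    have "(c', b3, int q) = (c,d,int q) - smul (d div int r) (a2,int r,0)"
      by (simp add: b3_def c'_def minus_div_mult_eq_mod[symmetric] algebra_simps)
    then show ?thesis using sg_diff[OF sg cd sg_smul[OF sg a2L]] by simp
  qed
  define a3 where "a3 = c' mod int m"
  have a3L: "(a3, b3, int q) \<in> L"
  proof -
    have "(a3, b3, int q) = (c',b3,int q) - smul (c' div int m) (int m,0,0)"
      by (simp add: a3_def minus_div_mult_eq_mod[symmetric] algebra_simps)
    then show ?thesis using sg_diff[OF sg 1 sg_smul[OF sg m(1)[THEN conjunct2]]] by simp
  qed
  have mpos: "m > 0" and mL: "(int m,0,0)\<in>L" using m(1) by auto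
  have rpos: "r > 0" using r(1) by auto
  have qpos: "q > 0" using q(1) by auto
  show ?thesis
  proof (rule that[of m r q a2 a3 b3])
    show "\<forall>k a b. 0<k \<longrightarrow> k<m \<longrightarrow> (int k,a,b)\<in>L \<longrightarrow> a = 0 \<longrightarrow> b = 0 \<longrightarrow> False"
      using m(2) by blast
    show "\<forall>k a b. 0<k \<longrightarrow> k<r \<longrightarrow> (a,int k,b)\<in>L \<longrightarrow> b = 0 \<longrightarrow> False"
      using r(2) by blast
    show "\<forall>k a b. 0<k \<longrightarrow> k<q \<longrightarrow> (a,b,int k)\<in>L \<longrightarrow> False"
      using q(2) by blast
  qed (use mpos rpos qpos mL a2L a3L in \<open>simp_all add: a2_def a3_def b3_def\<close>)
qed

lemma diff3_eq:
  assumes sg: "is_subgroup3 L" and d: "(d1, d2, int x - int y) \<in> L" and xy: "x < n" "y < n"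
  and mn: "\<forall>k a b. 0<k \<longrightarrow> k<n \<longrightarrow> (a,b,int k)\<in>L \<longrightarrow> False"
  shows "x = y"
proof (rule ccontr)
  assume "x \<noteq> y"
  then consider "x > y" | "y > x" by linarith
  then show False
  proof cases
    case 1
    have e: "int (x - y) = int x - int y" using 1 by simp
    have "(d1, d2, int (x - y)) \<in> L" using d unfolding e .
    then show False using 1 xy mn[rule_format, of "x-y" d1 d2] by linarith
  next
    case 2
    have "-(d1, d2, int x - int y) \<in> L" using sg_neg[OF sg d] .
    have e: "int (y - x) = int y - int x" using 2 by simp
    have "(-d1, -d2, int (y - x)) \<in> L" using \<open>-(d1, d2, int x - int y) \<in> L\<close> unfolding e by simp
    then show False using 2 xy mn[rule_format, of "y-x" "-d1" "-d2"] by linarith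
  qed
qed

lemma diff2_eq:
  assumes sg: "is_subgroup3 L" and d: "(d1, int x - int y, 0) \<in> L" and xy: "x < n" "y < n"
  and mn: "\<forall>k a b. 0<k \<longrightarrow> k<n \<longrightarrow> (a,int k,b)\<in>L \<longrightarrow> b = 0 \<longrightarrow> False"
  shows "x = y"
proof (rule ccontr)
  assume "x \<noteq> y"
  then consider "x > y" | "y > x" by linarith
  then show False
  proof cases
    case 1
    have e: "int (x - y) = int x - int y" using 1 by simp
    have "(d1, int (x - y), 0) \<in> L" using d unfolding e .
    then show False using 1 xy mn[rule_format, of "x-y" d1 0] by linarith
  next
    case 2
    have "-(d1, int x - int y, 0) \<in> L" using sg_neg[OF sg d] .
    have e: "int (y - x) = int y - int x" using 2 by simp
    have "(-d1, int (y - x), 0) \<in> L" using \<open>-(d1, int x - int y, 0) \<in> L\<close> unfolding e by simp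
    then show False using 2 xy mn[rule_format, of "y-x" "-d1" 0] by linarith
  qed
qed

lemma diff1_eq:
  assumes sg: "is_subgroup3 L" and d: "(int x - int y, 0, 0) \<in> L" and xy: "x < n" "y < n"
  and mn: "\<forall>k a b. 0<k \<longrightarrow> k<n \<longrightarrow> (int k,a,b)\<in>L \<longrightarrow> a = 0 \<longrightarrow> b = 0 \<longrightarrow> False"
  shows "x = y"
proof (rule ccontr)
  assume "x \<noteq> y"
  then consider "x > y" | "y > x" by linarith
  then show False
  proof cases
    case 1
    have e: "int (x - y) = int x - int y" using 1 by simp
    have "(int (x - y), 0, 0) \<in> L" using d unfolding e .
    then show False using 1 xy mn[rule_format, of "x-y" 0 0] by linarith
  next
    case 2
    have "-(int x - int y, 0, 0) \<in> L" using sg_neg[OF sg d] .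
    have e: "int (y - x) = int y - int x" using 2 by simp
    have "(int (y - x), 0, 0) \<in> L" using \<open>-(int x - int y, 0, 0) \<in> L\<close> unfolding e by simp
    then show False using 2 xy mn[rule_format, of "y-x" 0 0] by linarith
  qed
qed

lemma box_le_idx:
  assumes L: "L \<in> L3"
  and mm: "\<forall>k a b. 0<k \<longrightarrow> k<m \<longrightarrow> (int k,a,b)\<in>L \<longrightarrow> a = 0 \<longrightarrow> b = 0 \<longrightarrow> False"
  and rm: "\<forall>k a b. 0<k \<longrightarrow> k<r \<longrightarrow> (a,int k,b)\<in>L \<longrightarrow> b = 0 \<longrightarrow> False"
  and qm: "\<forall>k a b. 0<k \<longrightarrow> k<q \<longrightarrow> (a,b,int k)\<in>L \<longrightarrow> False"
  shows "m*r*q \<le> idx L"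
proof -
  have sg: "is_subgroup3 L" using L3_sg[OF L] .
  define B where "B = {0..<m} \<times> {0..<r} \<times> {0..<q}"
  define f where "f = (\<lambda>(i,j,k). coset (int i, int j, int k) L)"
  have sub: "f ` B \<subseteq> cosets3 L" unfolding f_def cosets3_coset by auto
  have inj: "inj_on f B"
  proof (rule inj_onI)
    fix u v assume "u \<in> B" "v \<in> B" "f u = f v"
    obtain i j k where u: "u = (i,j,k)" by (cases u) auto
    obtain i' j' k' where v: "v = (i',j',k')" by (cases v) auto
    have d: "(int i - int i', int j - int j', int k - int k') \<in> L"
      using coset_eq_imp[OF sg] \<open>f u = f v\<close> unfolding f_def u v by force
    have "k = k'" using diff3_eq[OF sg d _ _ qm] \<open>u\<in>B\<close> \<open>v\<in>B\<close> unfolding u v B_def by auto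
    then have d2: "(int i - int i', int j - int j', 0) \<in> L" using d by simp
    have "j = j'" using diff2_eq[OF sg d2 _ _ rm] \<open>u\<in>B\<close> \<open>v\<in>B\<close> unfolding u v B_def by auto
    then have d3: "(int i - int i', 0, 0) \<in> L" using d2 by simp
    have "i = i'" using diff1_eq[OF sg d3 _ _ mm] \<open>u\<in>B\<close> \<open>v\<in>B\<close> unfolding u v B_def by auto
    then show "u = v" using \<open>j=j'\<close> \<open>k=k'\<close> u v by simp
  qed
  have "card B \<le> card (cosets3 L)" using card_inj_on_le[OF inj sub L3_fin[OF L]] .
  then show ?thesis by (simp add: B_def idx_def card_cartesian_product)
qed



lemma bit_cases2: "(b::bit) = 0 \<or> b = 1" by (cases b) auto
lemma bit_add_self[simp]: "(a::bit) + a = 0"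
  using bit_cases2[of a] by auto
lemma bit_eq_iff_add: "((a::bit) + b = 0) \<longleftrightarrow> a = b"
  using bit_cases2[of a] bit_cases2[of b] by auto
lemma bit_sum3: "(a::bit) + b + c = 0 \<Longrightarrow> c = a + b"
  using bit_cases2[of a] bit_cases2[of b] bit_cases2[of c] by auto
lemma bit_sum3': "(a::bit) + b + c = 0 \<Longrightarrow> b = a + c"
  using bit_cases2[of a] bit_cases2[of b] bit_cases2[of c] by auto
lemma bit_sum3'': "(a::bit) + b + c = 0 \<Longrightarrow> a = b + c"
  using bit_cases2[of a] bit_cases2[of b] bit_cases2[of c] by auto

lemma row_modA:
  fixes v :: "int \<Rightarrow> bit"
  assumes s: "2 \<le> s" and rel: "\<forall>i. v i + v (i+1) + v (i+s) = 0"
  and z: "\<forall>i. 0 \<le> i \<and> i < s \<longrightarrow> v i = 0"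
  shows "v (int n) = 0"
proof (induction n rule: less_induct)
  case (less n)
  show ?case
  proof (cases "int n < s")
    case True then show ?thesis using z by auto
  next
    case False
    define i where "i = int n - s"
    have "v (int n) = v i + v (i+1)" using bit_sum3[OF rel[rule_format, of i]] by (simp add: i_def)
    moreover have "v i = 0" using less[of "nat i"] False s by (simp add: i_def)
    moreover have "v (i+1) = 0" using less[of "nat (i+1)"] False s by (simp add: i_def)
    ultimately show ?thesis by simp
  qed
qed

lemma row_modB:
  fixes v :: "int \<Rightarrow> bit"
  assumes s: "1 \<le> s" "s \<le> m" and rel: "\<forall>i. v i + v (i+1) + v (i+s) = 0"
  and per: "\<forall>i. v (i + m) = v i"
  and z: "\<forall>i. 0 \<le> i \<and> i < m - s + 1 \<longrightarrow> v i = 0"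
  shows "v (int n) = 0"
proof (induction n rule: less_induct)
  case (less n)
  show ?case
  proof (cases "int n < m - s + 1")
    case True then show ?thesis using z by auto
  next
    case False
    define i where "i = int n - 1"
    have "v (int n) = v i + v (i+s)" using bit_sum3'[OF rel[rule_format, of i]] by (simp add: i_def)
    moreover have "v i = 0" using less[of "nat i"] False s by (simp add: i_def)
    moreover have "v (i+s) = v (i+s-m)" using per[rule_format, of "i+s-m"] by simp
    moreover have "v (i+s-m) = 0" using less[of "nat (i+s-m)"] False s by (simp add: i_def)
    ultimately show ?thesis by simp
  qed
qed

lemma per_mod:
  fixes v :: "int \<Rightarrow> bit"
  assumes m: "m > 0" and per: "\<forall>i. v (i + m) = v i"
  shows "v i = v (i mod m)"
proof -
  have a: "v (j + int k * m) = v j" for j k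
    by (induction k) (auto simp: algebra_simps per[rule_format, of "j + int k * m" for k, simplified algebra_simps])
  have b: "v (j + c * m) = v j" for j c
  proof (cases "c \<ge> 0")
    case True then show ?thesis using a[of j "nat c"] by simp
  next
    case False
    have "v ((j + c*m) + int (nat (-c)) * m) = v (j + c*m)" by (rule a)
    then show ?thesis using False by simp
  qed
  show ?thesis using b[of "i mod m" "i div m"] by (simp add: algebra_simps)
qed

definition rowbound :: "int \<Rightarrow> int \<Rightarrow> int" where
  "rowbound m s = (if s = 1 then 0 else min s (m - s + 1))"

lemma row_zero:
  fixes v :: "int \<Rightarrow> bit"
  assumes m: "m > 0" and s: "1 \<le> s" "s \<le> m" and rel: "\<forall>i. v i + v (i+1) + v (i+s) = 0"
  and per: "\<forall>i. v (i + m) = v i"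
  and z: "\<forall>i. 0 \<le> i \<and> i < rowbound m s \<longrightarrow> v i = 0"
  shows "v i = 0"
proof (cases "s = 1")
  case True
  then show ?thesis using bit_sum3''[OF rel[rule_format, of i]] by simp
next
  case False
  have nat: "v (int n) = 0" for n
  proof (cases "s \<le> m - s + 1")
    case True
    then show ?thesis using row_modA[OF _ rel] z False s by (simp add: rowbound_def)
  next
    case F: False
    then show ?thesis using row_modB[OF s rel per] z False s by (simp add: rowbound_def)
  qed
  have "v i = v (i mod m)" by (rule per_mod[OF m per])
  also have "\<dots> = v (int (nat (i mod m)))" using m by simp
  also have "\<dots> = 0" by (rule nat)
  finally show ?thesis .
qed

lemma rowbound_le: "0 < m \<Longrightarrow> 1 \<le> s \<Longrightarrow> s \<le> m \<Longrightarrow> 3 * rowbound m s \<le> 2 * m \<and> 0 \<le> rowbound m s"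
  unfolding rowbound_def min_def by auto



definition FixSet :: "pt set \<Rightarrow> (pt \<Rightarrow> bit) set" where
  "FixSet L = {x \<in> Xsys. \<forall>n\<in>L. shift n x = x}"

lemma Fix_FixSet: "Fix L = card (FixSet L)" by (simp add: Fix_def FixSet_def)

lemma FixSet_per: "x \<in> FixSet L \<Longrightarrow> l \<in> L \<Longrightarrow> x (p + l) = x p"
  unfolding FixSet_def shift_def by (metis (mono_tags, lifting) mem_Collect_eq)

lemma Xsys_rel: "x \<in> Xsys \<Longrightarrow> x (i,j,k) + x (i+1,j,k) + x (i,j+1,k) = 0"
  by (simp add: Xsys_def)

lemma bit_UNIV: "(UNIV :: bit set) = {0,1}" using bit_cases2 by auto
lemma card_UNIV_bit: "card (UNIV :: bit set) = 2"
  unfolding bit_UNIV by simp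
lemma finite_UNIV_bit: "finite (UNIV :: bit set)"
  unfolding bit_UNIV by simp

lemma det_card:
  assumes D: "finite D" and det: "\<forall>x\<in>S. \<forall>y\<in>S. (\<forall>p\<in>D. x p = y p) \<longrightarrow> x = (y :: pt \<Rightarrow> bit)"
  shows "finite S \<and> card S \<le> 2 ^ card D"
proof -
  have inj: "inj_on (\<lambda>x. restrict x D) S"
  proof (rule inj_onI)
    fix x y assume "x \<in> S" "y \<in> S" "restrict x D = restrict y D"
    then have "\<forall>p\<in>D. x p = y p" by (metis restrict_apply')
    then show "x = y" using det \<open>x\<in>S\<close> \<open>y\<in>S\<close> by blast
  qed
  have sub: "(\<lambda>x. restrict x D) ` S \<subseteq> PiE D (\<lambda>_. UNIV)" by auto
  have fin: "finite (PiE D (\<lambda>_. UNIV :: bit set))" using D by (simp add: finite_PiE finite_UNIV_bit)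
  have c: "card (PiE D (\<lambda>_. UNIV :: bit set)) = 2 ^ card D"
    using D by (simp add: card_PiE card_UNIV_bit)
  show ?thesis using card_inj_on_le[OF inj sub fin] inj_on_finite[OF inj sub fin] c by simp
qed

lemma prop_zero:
  assumes sg: "is_subgroup3 L" and zX: "z \<in> Xsys" and per: "\<forall>l\<in>L. \<forall>p. z (p + l) = z p"
  and v2: "(a2, int r, 0) \<in> L" "r > 0" and v3: "(a3, b3, int q) \<in> L" "q > 0"
  and row: "\<forall>i k. 0 \<le> k \<and> k < int q \<longrightarrow> z (i, 0, k) = 0"
  shows "z p = 0"
proof -
  have persm: "z (p' - smul c v) = z p'" if "v \<in> L" for p' c v
    using per[rule_format, OF sg_smul[OF sg that, of c], of "p' - smul c v"] by simp
  have st: "z (i, int j, k) = 0" if "0 \<le> k" "k < int q" for i j k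
    using that
  proof (induction j arbitrary: i)
    case 0 then show ?case using row by simp
  next
    case (Suc j)
    have "z (i, int j + 1, k) = z (i, int j, k) + z (i+1, int j, k)"
      using bit_sum3[OF Xsys_rel[OF zX, of i "int j" k]] .
    then show ?case using Suc by (simp add: add.commute)
  qed
  obtain i j k where p: "p = (i,j,k)" by (cases p) auto
  define p' where "p' = p - smul (k div int q) (a3, b3, int q)"
  have zp': "z p = z p'" unfolding p'_def using persm[OF v3(1)] by simp
  define j' where "j' = j - (k div int q) * b3"
  have p'e: "p' = (i - (k div int q) * a3, j', k mod int q)"
    unfolding p'_def p j'_def by (simp add: minus_div_mult_eq_mod[symmetric] algebra_simps)
  define p'' where "p'' = p' - smul (j' div int r) (a2, int r, 0)"
  have zp'': "z p' = z p''" unfolding p''_def using persm[OF v2(1)] by simp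
  have nn: "int (nat (j' mod int r)) = j' mod int r" using v2(2) by simp
  have p''e: "p'' = (i - (k div int q) * a3 - (j' div int r) * a2, int (nat (j' mod int r)), k mod int q)"
    unfolding nn
    unfolding p''_def p'e using v2(2) by (simp add: minus_div_mult_eq_mod[symmetric] algebra_simps)
  have "z p'' = 0" unfolding p''e by (rule st) (use v3(2) in auto)
  then show ?thesis using zp' zp'' by simp
qed

lemma sum_in_Xsys:
  assumes "x \<in> Xsys" "y \<in> Xsys" shows "(\<lambda>p. x p + y p) \<in> Xsys"
  unfolding Xsys_def
proof (intro CollectI allI)
  fix i j k
  have e: "x (i,j,k) + y (i,j,k) + (x (i+1,j,k) + y (i+1,j,k)) + (x (i,j+1,k) + y (i,j+1,k))
      = (x (i,j,k) + x (i+1,j,k) + x (i,j+1,k)) + (y (i,j,k) + y (i+1,j,k) + y (i,j+1,k))"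
    by (simp only: ac_simps)
  show "x (i,j,k) + y (i,j,k) + (x (i+1,j,k) + y (i+1,j,k)) + (x (i,j+1,k) + y (i,j+1,k)) = 0"
    unfolding e Xsys_rel[OF assms(1)] Xsys_rel[OF assms(2)] by (rule add_0)
qed

lemma det_FixSet:
  assumes L: "L \<in> L3" and x: "x \<in> FixSet L" and y: "y \<in> FixSet L"
  and v2: "(a2, int r, 0) \<in> L" "r > 0" and v3: "(a3, b3, int q) \<in> L" "q > 0"
  and row: "\<forall>i k. 0 \<le> k \<and> k < int q \<longrightarrow> (\<forall>z. z \<in> Xsys \<longrightarrow> (\<forall>l\<in>L. \<forall>p. z (p + l) = z p) \<longrightarrow>
              (\<forall>i' k'. (int i', 0, int k') \<in> D \<longrightarrow> z (int i', 0, int k') = 0) \<longrightarrow> z (i, 0, k) = 0)"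
  and Dsub: "\<forall>d\<in>D. \<exists>i' k'. d = (int i', 0, int k')"
  and agree: "\<forall>p\<in>D. x p = y p"
  shows "x = y"
proof -
  define z where "z = (\<lambda>p. x p + y p)"
  have xX: "x \<in> Xsys" and yX: "y \<in> Xsys" using x y by (auto simp: FixSet_def)
  have zX: "z \<in> Xsys" unfolding z_def by (rule sum_in_Xsys[OF xX yX])
  have per: "\<forall>l\<in>L. \<forall>p. z (p + l) = z p" unfolding z_def using FixSet_per[OF x] FixSet_per[OF y] by simp
  have zD: "\<forall>i' k'. (int i', 0, int k') \<in> D \<longrightarrow> z (int i', 0, int k') = 0"
    using agree unfolding z_def by simp
  have r0: "\<forall>i k. 0 \<le> k \<and> k < int q \<longrightarrow> z (i,0,k) = 0"
    using row zX per zD by blast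
  have "z p = 0" for p
    by (rule prop_zero[OF L3_sg[OF L] zX per v2 v3 r0])
  then show ?thesis
  proof (intro ext)
    fix p assume h: "\<And>p. z p = 0"
    show "x p = y p" using h[of p] bit_eq_iff_add unfolding z_def by blast
  qed
qed



lemma per_row:
  fixes z :: "pt \<Rightarrow> bit"
  assumes per: "\<forall>l\<in>L. \<forall>p. z (p + l) = (z p :: bit)" and m: "(int m, 0, 0) \<in> L" "m > 0"
  shows "z (i, 0, k) = z (i mod int m, 0, k)"
proof -
  have "\<forall>i. (\<lambda>i. z (i,0,k)) (i + int m) = (\<lambda>i. z (i,0,k)) i"
  proof
    fix i
    have "z ((i,0,k) + (int m,0,0)) = z (i,0,k)" using per m(1) by blast
    then show "(\<lambda>i. z (i,0,k)) (i + int m) = (\<lambda>i. z (i,0,k)) i" by (simp only: add_Pair add_0_right)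
  qed
  from per_mod[OF _ this] m(2) show ?thesis by simp
qed

lemma Fix_bound:
  assumes L: "L \<in> L3"
  shows "\<exists>w::nat. finite (FixSet L) \<and> card (FixSet L) \<le> 2^w \<and> 3*w \<le> 2*idx L"
proof -
  obtain m r q :: nat and a2 a3 b3 :: int where g:
  "m>0" "r>0" "q>0" "(int m,0,0)\<in>L" "(a2,int r,0)\<in>L" "(a3,b3,int q)\<in>L"
  "0 \<le> a2" "a2 < int m" "0 \<le> a3" "a3 < int m" "0\<le>b3" "b3< int r"
  "\<forall>k a b. 0<k \<longrightarrow> k<m \<longrightarrow> (int k,a,b)\<in>L \<longrightarrow> a = 0 \<longrightarrow> b = 0 \<longrightarrow> False"
  "\<forall>k a b. 0<k \<longrightarrow> k<r \<longrightarrow> (a,int k,b)\<in>L \<longrightarrow> b = 0 \<longrightarrow> False"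
  "\<forall>k a b. 0<k \<longrightarrow> k<q \<longrightarrow> (a,b,int k)\<in>L \<longrightarrow> False"
    using L3_gens[OF L] by blast
  have idx: "m*r*q \<le> idx L" using box_le_idx[OF L g(13,14,15)] .
  define D where "D w = (\<lambda>(i,k). (int i, 0::int, int k)) ` ({0..<w}\<times>{0..<q})" for w
  have Dfin: "finite (D w)" for w unfolding D_def by simp
  have Dcard: "card (D w) \<le> w * q" for w
    unfolding D_def using card_image_le[of "{0..<w}\<times>{0..<q}"] by (simp add: card_cartesian_product)
  have Dsub: "\<forall>d\<in>D w. \<exists>i' k'. d = (int i', 0, int k')" for w unfolding D_def by auto
  have Dmem: "(int i, 0, int k) \<in> D w" if "i < w" "k < q" for i k w
    unfolding D_def using that by force
  have main: "finite (FixSet L) \<and> card (FixSet L) \<le> 2 ^ card (D w)"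
    if row: "\<forall>i k. 0 \<le> k \<and> k < int q \<longrightarrow> (\<forall>z. z \<in> Xsys \<longrightarrow> (\<forall>l\<in>L. \<forall>p. z (p + l) = z p) \<longrightarrow>
              (\<forall>i' k'. (int i', 0, int k') \<in> D w \<longrightarrow> z (int i', 0, int k') = 0) \<longrightarrow> z (i, 0, k) = 0)" for w
  proof (rule det_card[OF Dfin])
    show "\<forall>x\<in>FixSet L. \<forall>y\<in>FixSet L. (\<forall>p\<in>D w. x p = y p) \<longrightarrow> x = y"
      using det_FixSet[OF L _ _ g(5,2) g(6,3) row Dsub] by blast
  qed
  show ?thesis
  proof (cases "r \<ge> 2")
    case True
    have row: "\<forall>i k. 0 \<le> k \<and> k < int q \<longrightarrow> (\<forall>z. z \<in> Xsys \<longrightarrow> (\<forall>l\<in>L. \<forall>p. z (p + l) = z p) \<longrightarrow>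
              (\<forall>i' k'. (int i', 0, int k') \<in> D m \<longrightarrow> z (int i', 0, int k') = 0) \<longrightarrow> z (i, 0, k) = 0)"
    proof (intro allI impI)
      fix i k z assume k: "0 \<le> k \<and> k < int q" and zX: "z \<in> Xsys"
        and per: "\<forall>l\<in>L. \<forall>p. z (p + l) = z p"
        and zD: "\<forall>i' k'. (int i', 0, int k') \<in> D m \<longrightarrow> z (int i', 0, int k') = 0"
      have "z (i,0,k) = z (i mod int m, 0, k)" by (rule per_row[OF per g(4,1)])
      also have "\<dots> = z (int (nat (i mod int m)), 0, int (nat k))" using g(1) k by simp
      also have "\<dots> = 0"
      proof -
        have "(int (nat (i mod int m)), 0, int (nat k)) \<in> D m"
          by (rule Dmem) (use g(1) k in \<open>auto simp: nat_less_iff\<close>)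
        then show ?thesis using zD by blast
      qed
      finally show "z (i,0,k) = 0" .
    qed
    have "3 * card (D m) \<le> 2 * idx L"
    proof -
      have "3 * card (D m) \<le> 3 * (m*q)" using Dcard[of m] by simp
      also have "\<dots> \<le> 2 * (m*r*q)" using True by (simp add: mult_le_mono)
      also have "\<dots> \<le> 2 * idx L" using idx by simp
      finally show ?thesis .
    qed
    then show ?thesis using main[OF row] by blast
  next
    case False
    then have r1: "r = 1" using g(2) by simp
    obtain t where t: "t = (-a2) mod int m" by blast
    define s where "s = (if t = 0 then int m else t)"
    have mb: "0 \<le> t" "t < int m" using g(1) unfolding t by simp_all
    have s1: "1 \<le> s" "s \<le> int m" using mb g(1) unfolding s_def by auto
    have smod: "(i + s) mod int m = (i - a2) mod int m" for i
    proof -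
      have "s mod int m = (-a2) mod int m" unfolding s_def t by auto
      then show ?thesis by (metis mod_add_right_eq uminus_add_conv_diff add.commute)
    qed
    define rb where "rb = nat (rowbound (int m) s)"
    have rbb: "3 * rowbound (int m) s \<le> 2 * int m \<and> 0 \<le> rowbound (int m) s"
      using rowbound_le[of "int m" s] g(1) s1 by simp
    have row: "\<forall>i k. 0 \<le> k \<and> k < int q \<longrightarrow> (\<forall>z. z \<in> Xsys \<longrightarrow> (\<forall>l\<in>L. \<forall>p. z (p + l) = z p) \<longrightarrow>
              (\<forall>i' k'. (int i', 0, int k') \<in> D rb \<longrightarrow> z (int i', 0, int k') = 0) \<longrightarrow> z (i, 0, k) = 0)"
    proof (intro allI impI)
      fix i k z assume k: "0 \<le> k \<and> k < int q" and zX: "z \<in> Xsys"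
        and per: "\<forall>l\<in>L. \<forall>p. z (p + l) = z p"
        and zD: "\<forall>i' k'. (int i', 0, int k') \<in> D rb \<longrightarrow> z (int i', 0, int k') = 0"
      define v where "v = (\<lambda>i. z (i, 0, k))"
      have vmod: "v i = v (i mod int m)" for i unfolding v_def by (rule per_row[OF per g(4,1)])
      have vper: "\<forall>i. v (i + int m) = v i"
      proof
        fix i show "v (i + int m) = v i" using vmod[of "i + int m"] vmod[of i] by simp
      qed
      have rel: "\<forall>i. v i + v (i+1) + v (i+s) = 0"
      proof
        fix i
        have l: "(a2,1,0) \<in> L" using g(5) r1 by simp
        have "z ((i - a2, 0, k) + (a2, 1, 0)) = z (i - a2, 0, k)" using per l by blast
        then have a: "z (i, 1, k) = z (i - a2, 0, k)" by simp
        have b: "v (i - a2) = v (i + s)" using vmod[of "i - a2"] vmod[of "i+s"] smod[of i] by simp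
        show "v i + v (i+1) + v (i+s) = 0"
          using Xsys_rel[OF zX, of i 0 k] a b unfolding v_def by simp
      qed
      have z0: "\<forall>i. 0 \<le> i \<and> i < rowbound (int m) s \<longrightarrow> v i = 0"
      proof (intro allI impI)
        fix i assume i: "0 \<le> i \<and> i < rowbound (int m) s"
        have "v i = z (int (nat i), 0, int (nat k))" using i k unfolding v_def by simp
        also have "\<dots> = 0"
        proof -
          have "(int (nat i), 0, int (nat k)) \<in> D rb"
            by (rule Dmem) (use i k in \<open>auto simp: nat_less_iff rb_def\<close>)
          then show ?thesis using zD by blast
        qed
        finally show "v i = 0" .
      qed
      have "v i = 0" by (rule row_zero[OF _ s1 rel vper z0]) (use g(1) in simp)
      then show "z (i,0,k) = 0" unfolding v_def .
    qed
    have "3 * card (D rb) \<le> 2 * idx L"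
    proof -
      have "3 * card (D rb) \<le> 3 * (rb*q)" using Dcard[of rb] by simp
      also have "\<dots> = (3 * rb) * q" by simp
      also have "\<dots> \<le> (2*m) * q" using rbb unfolding rb_def by (intro mult_le_mono1) linarith
      also have "\<dots> = 2 * (m*r*q)" using r1 by simp
      also have "\<dots> \<le> 2 * idx L" using idx by simp
      finally show ?thesis .
    qed
    then show ?thesis using main[OF row] by blast
  qed
qed

lemma zero_FixSet: "L \<in> L3 \<Longrightarrow> (\<lambda>_. 0) \<in> FixSet L"
  by (simp add: FixSet_def Xsys_def shift_def)

lemma Fix_pos: "L \<in> L3 \<Longrightarrow> Fix L \<ge> 1"
proof -
  assume L: "L \<in> L3"
  obtain w where "finite (FixSet L)" using Fix_bound[OF L] by blast
  then show ?thesis using zero_FixSet[OF L] unfolding Fix_FixSet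
    by (metis One_nat_def Suc_leI card_gt_0_iff empty_iff)
qed

lemma Fix_le: "L \<in> L3 \<Longrightarrow> 3 * ln (real (Fix L)) \<le> 2 * real (idx L) * ln 2"
proof -
  assume L: "L \<in> L3"
  obtain w where w: "finite (FixSet L)" "card (FixSet L) \<le> 2^w" "3*w \<le> 2*idx L"
    using Fix_bound[OF L] by blast
  have pos: "real (Fix L) > 0" using Fix_pos[OF L] by simp
  have "ln (real (Fix L)) \<le> ln (2^w)" using w(2) pos unfolding Fix_FixSet
    by (subst ln_le_cancel_iff) auto
  also have "\<dots> = real w * ln 2" by (simp add: ln_realpow)
  finally have "3 * ln (real (Fix L)) \<le> 3 * real w * ln 2" by simp
  also have "\<dots> \<le> 2 * real (idx L) * ln 2"
  proof -
    have "3 * real w \<le> 2 * real (idx L)" using w(3) by linarith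
    then show ?thesis by (intro mult_right_mono) auto
  qed
  finally show ?thesis .
qed



definition LN :: "nat \<Rightarrow> pt set" where
  "LN N = {(i,j,k). 3 dvd (i - j) \<and> int N dvd k}"

lemma LN_sg: "is_subgroup3 (LN N)"
  unfolding is_subgroup3_def LN_def
proof (intro conjI ballI)
  show "(0::pt) \<in> {(i, j, k). 3 dvd i - j \<and> int N dvd k}" by (simp add: zero_prod_def)
next
  fix a b assume a: "a \<in> {(i, j, k). (3::int) dvd i - j \<and> int N dvd k}"
    and b: "b \<in> {(i, j, k). (3::int) dvd i - j \<and> int N dvd k}"
  obtain a1 a2 a3 where ae: "a = (a1,a2,a3)" by (cases a) auto
  obtain b1 b2 b3 where be: "b = (b1,b2,b3)" by (cases b) auto
  have "(a1 + b1) - (a2 + b2) = (a1 - a2) + (b1 - b2)" by simp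
  then show "a + b \<in> {(i, j, k). 3 dvd i - j \<and> int N dvd k}"
    using a b unfolding ae be by (auto intro: dvd_add simp del: diff_add_eq simp add: \<open>(a1 + b1) - (a2 + b2) = (a1 - a2) + (b1 - b2)\<close>)
next
  fix a assume a: "a \<in> {(i, j, k). (3::int) dvd i - j \<and> int N dvd k}"
  obtain a1 a2 a3 where ae: "a = (a1,a2,a3)" by (cases a) auto
  have "-a1 - -a2 = -(a1 - a2)" by simp
  then show "- a \<in> {(i, j, k). 3 dvd i - j \<and> int N dvd k}"
    using a unfolding ae by (auto simp: dvd_diff_commute)
qed

lemma dvd_small: "n dvd (x - y) \<Longrightarrow> 0 \<le> x \<Longrightarrow> x < n \<Longrightarrow> 0 \<le> y \<Longrightarrow> y < n \<Longrightarrow> x = (y::int)"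
  using dvd_imp_le_int[of "x - y" n] by (cases "x = y") auto

lemma LN_cosets:
  assumes N: "N > 0"
  shows "cosets3 (LN N) = (\<lambda>(a,c). coset (int a, 0, int c) (LN N)) ` ({0..<3}\<times>{0..<N})"
    and "inj_on (\<lambda>(a,c). coset (int a, 0, int c) (LN N)) ({0..<3}\<times>{0..<N})"
proof -
  show "cosets3 (LN N) = (\<lambda>(a,c). coset (int a, 0, int c) (LN N)) ` ({0..<3}\<times>{0..<N})"
  proof
    show "cosets3 (LN N) \<subseteq> (\<lambda>(a,c). coset (int a, 0, int c) (LN N)) ` ({0..<3}\<times>{0..<N})"
    proof
      fix C assume "C \<in> cosets3 (LN N)"
      then obtain v where C: "C = coset v (LN N)" unfolding cosets3_coset by auto
      obtain i j k where v: "v = (i,j,k)" by (cases v) auto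
      define a where "a = nat ((i - j) mod 3)"
      define c where "c = nat (k mod int N)"
      have ai: "int a = (i - j) mod 3" unfolding a_def by simp
      have ci: "int c = k mod int N" unfolding c_def using N by simp
      have "v - (int a, 0, int c) \<in> LN N"
      proof -
        have "3 dvd (i - (i - j) mod 3 - j)"
          by (metis dvd_minus_mod minus_diff_eq diff_diff_eq2 add.commute diff_add_eq diff_diff_eq)
        moreover have "int N dvd (k - k mod int N)" by (rule dvd_minus_mod)
        ultimately show ?thesis unfolding v ai ci LN_def by simp
      qed
      then have "C = coset (int a, 0, int c) (LN N)" unfolding C using coset_eqI[OF LN_sg] by blast
      moreover have "a < 3" unfolding a_def by simp
      moreover have "c < N" unfolding c_def using N by (simp add: nat_less_iff)
      ultimately show "C \<in> (\<lambda>(a,c). coset (int a, 0, int c) (LN N)) ` ({0..<3}\<times>{0..<N})" by force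
    qed
  next
    show "(\<lambda>(a,c). coset (int a, 0, int c) (LN N)) ` ({0..<3}\<times>{0..<N}) \<subseteq> cosets3 (LN N)"
      unfolding cosets3_coset by auto
  qed
  show "inj_on (\<lambda>(a,c). coset (int a, 0, int c) (LN N)) ({0..<3}\<times>{0..<N})"
  proof (rule inj_onI)
    fix u u' assume u: "u \<in> {0..<3}\<times>{0..<N}" and u': "u' \<in> {0..<3}\<times>{0..<N}"
      and eq: "(\<lambda>(a,c). coset (int a, 0, int c) (LN N)) u = (\<lambda>(a,c). coset (int a, 0, int c) (LN N)) u'"
    obtain a c where ue: "u = (a,c)" by (cases u) auto
    obtain a' c' where ue': "u' = (a',c')" by (cases u') auto
    have "(int a, 0, int c) - (int a', 0, int c') \<in> LN N"
      by (rule coset_eq_imp[OF LN_sg]) (use eq ue ue' in simp)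
    then have "(int a - int a', 0, int c - int c') \<in> LN N" by simp
    then have d: "3 dvd (int a - int a')" "int N dvd (int c - int c')" unfolding LN_def by auto
    have "int a = int a'" by (rule dvd_small[OF d(1)]) (use u u' ue ue' in auto)
    moreover have "int c = int c'" by (rule dvd_small[OF d(2)]) (use u u' ue ue' in auto)
    ultimately show "u = u'" using ue ue' by simp
  qed
qed

lemma LN_L3: "N > 0 \<Longrightarrow> LN N \<in> L3"
  unfolding L3_def using LN_sg LN_cosets(1) by auto

lemma LN_idx: "N > 0 \<Longrightarrow> idx (LN N) = 3 * N"
proof -
  assume N: "N > 0"
  show ?thesis unfolding idx_def LN_cosets(1)[OF N] card_image[OF LN_cosets(2)[OF N]]
    by (simp add: card_cartesian_product)
qed



definition wv :: "bit \<times> bit \<Rightarrow> int \<Rightarrow> bit" where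
  "wv b d = (if d = 0 then fst b else if d = 1 then snd b else fst b + snd b)"

definition Xf :: "nat \<Rightarrow> (int \<Rightarrow> bit \<times> bit) \<Rightarrow> pt \<Rightarrow> bit" where
  "Xf N \<phi> p = wv (\<phi> (snd (snd p) mod int N)) ((fst p - fst (snd p)) mod 3)"

lemma wv_sum: "wv b (d mod 3) + wv b ((d+1) mod 3) + wv b ((d-1) mod 3) = 0"
proof -
  obtain b1 b2 where b: "b = (b1,b2)" by (cases b) auto
  have s: "b1 + b2 + (b1 + b2) = 0" "b2 + (b1 + b2) + b1 = 0" "b1 + b2 + b1 + b2 = 0"
    using bit_cases2[of b1] bit_cases2[of b2] by auto
  consider "d mod 3 = 0" | "d mod 3 = 1" | "d mod 3 = 2" by linarith
  then show ?thesis
  proof cases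
    case 1
    then have "(d+1) mod 3 = 1" "(d-1) mod 3 = 2" by presburger+
    then show ?thesis using 1 s unfolding wv_def b by simp
  next
    case 2
    then have "(d+1) mod 3 = 2" "(d-1) mod 3 = 0" by presburger+
    then show ?thesis using 2 s unfolding wv_def b by simp
  next
    case 3
    then have "(d+1) mod 3 = 0" "(d-1) mod 3 = 1" by presburger+
    then show ?thesis using 3 s unfolding wv_def b by (simp add: ac_simps)
  qed
qed

lemma Xf_Xsys: "Xf N \<phi> \<in> Xsys"
  unfolding Xsys_def
proof (intro CollectI allI)
  fix i j k :: int
  have e1: "i + 1 - j = (i - j) + 1" and e2: "i - (j + 1) = (i - j) - 1" by simp_all
  show "Xf N \<phi> (i, j, k) + Xf N \<phi> (i + 1, j, k) + Xf N \<phi> (i, j + 1, k) = 0"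
    unfolding Xf_def fst_conv snd_conv e1 e2 by (rule wv_sum)
qed

lemma Xf_fix: "Xf N \<phi> \<in> FixSet (LN N)"
  unfolding FixSet_def
proof (intro CollectI conjI ballI Xf_Xsys)
  fix n assume n: "n \<in> LN N"
  obtain a b c where ne: "n = (a,b,c)" by (cases n) auto
  have d: "3 dvd a - b" "int N dvd c" using n unfolding ne LN_def by auto
  show "shift n (Xf N \<phi>) = Xf N \<phi>"
  proof
    fix p
    obtain i j k :: int where pe: "p = (i,j,k)" by (cases p) auto
    have 1: "(k + c) mod int N = k mod int N" using d(2) by (metis mod_add_self2 dvd_def mod_mult_self2 mult.commute)
    have "i + a - (j + b) = (i - j) + (a - b)" by simp
    then have 2: "(i + a - (j + b)) mod 3 = (i - j) mod 3" using d(1) by (metis dvd_def mod_mult_self2 mult.commute)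
    show "shift n (Xf N \<phi>) p = Xf N \<phi> p"
      unfolding shift_def pe ne Xf_def using 1 2 by simp
  qed
qed

lemma card_UNIV_bit2: "card (UNIV :: (bit \<times> bit) set) = 4"
proof -
  show ?thesis unfolding UNIV_Times_UNIV[symmetric] card_cartesian_product card_UNIV_bit by simp
qed

lemma Fix_LN: assumes N: "N > 0" shows "Fix (LN N) \<ge> 4 ^ N"
proof -
  define P where "P = PiE {0..<int N} (\<lambda>_. UNIV :: (bit \<times> bit) set)"
  have cP: "card P = 4 ^ N" unfolding P_def by (simp add: card_PiE card_UNIV_bit2 card_UNIV_bit)
  have sub: "Xf N ` P \<subseteq> FixSet (LN N)" using Xf_fix by auto
  have inj: "inj_on (Xf N) P"
  proof (rule inj_onI)
    fix \<phi> \<psi> assume \<phi>: "\<phi> \<in> P" and \<psi>: "\<psi> \<in> P" and eq: "Xf N \<phi> = Xf N \<psi>"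
    show "\<phi> = \<psi>"
    proof
      fix c
      show "\<phi> c = \<psi> c"
      proof (cases "c \<in> {0..<int N}")
        case True
        then have cm: "c mod int N = c" by simp
        have "Xf N \<phi> (0,0,c) = Xf N \<psi> (0,0,c)" "Xf N \<phi> (1,0,c) = Xf N \<psi> (1,0,c)" using eq by simp_all
        then have "fst (\<phi> c) = fst (\<psi> c)" "snd (\<phi> c) = snd (\<psi> c)" unfolding Xf_def wv_def snd_conv fst_conv cm by simp_all
        then show ?thesis by (simp add: prod_eq_iff)
      next
        case False
        have "\<phi> c = undefined" by (rule PiE_arb[OF \<phi>[unfolded P_def] False])
        moreover have "\<psi> c = undefined" by (rule PiE_arb[OF \<psi>[unfolded P_def] False])
        ultimately show ?thesis by simp
      qed
    qed
  qed
  obtain w where fin: "finite (FixSet (LN N))" using Fix_bound[OF LN_L3[OF N]] by blast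
  have "card P \<le> card (FixSet (LN N))" using card_inj_on_le[OF inj sub fin] .
  then show ?thesis using cP unfolding Fix_FixSet by simp
qed



lemma eventually_index_filter:
  "eventually P index_filter \<longleftrightarrow> (\<exists>N. \<forall>L\<in>L3. N \<le> idx L \<longrightarrow> P L)"
proof -
  have "eventually P index_filter \<longleftrightarrow> (\<exists>N\<in>UNIV. eventually P (principal {L \<in> L3. N \<le> idx L}))"
    unfolding index_filter_def
  proof (rule eventually_INF_base)
    fix a b :: nat
    show "\<exists>x\<in>UNIV. principal {L \<in> L3. x \<le> idx L} \<le> inf (principal {L \<in> L3. a \<le> idx L}) (principal {L \<in> L3. b \<le> idx L})"
      by (intro bexI[of _ "max a b"]) auto
  qed simp
  then show ?thesis by (simp add: eventually_principal imp_conjL Ball_def)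
qed

lemma growth_le: "growth \<le> ereal (2/3 * ln 2)"
  unfolding growth_def
proof (rule Limsup_bounded)
  show "\<forall>\<^sub>F L in index_filter. ereal (ln (real (Fix L)) / real (idx L)) \<le> ereal (2/3 * ln 2)"
    unfolding eventually_index_filter
  proof (intro exI[of _ 0] ballI impI)
    fix L assume L: "L \<in> L3"
    have h: "3 * ln (real (Fix L)) \<le> 2 * real (idx L) * ln 2" by (rule Fix_le[OF L])
    show "ereal (ln (real (Fix L)) / real (idx L)) \<le> ereal (2/3 * ln 2)"
    proof (cases "idx L = 0")
      case True then show ?thesis by simp
    next
      case False
      then have "real (idx L) > 0" by simp
      then show ?thesis using h by (simp add: divide_le_eq field_simps)
    qed
  qed
qed

lemma growth_ge: "ereal (2/3 * ln 2) \<le> growth"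
  unfolding growth_def Limsup_def
proof (rule INF_greatest)
  fix P assume "P \<in> {P. eventually P index_filter}"
  then obtain N where N: "\<forall>L\<in>L3. N \<le> idx L \<longrightarrow> P L" unfolding eventually_index_filter by auto
  define L where "L = LN (Suc N)"
  have L3: "L \<in> L3" unfolding L_def by (rule LN_L3) simp
  have idx: "idx L = 3 * Suc N" unfolding L_def by (rule LN_idx) simp
  have PL: "P L" using N L3 idx by auto
  have F: "real (Fix L) \<ge> 4 ^ Suc N" unfolding L_def using Fix_LN[of "Suc N"]
    by (metis of_nat_le_iff of_nat_numeral of_nat_power zero_less_Suc)
  have "ln (4 ^ Suc N) \<le> ln (real (Fix L))" using F Fix_pos[OF L3] by (subst ln_le_cancel_iff) auto
  moreover have "ln ((4::real) ^ Suc N) = real (Suc N) * (2 * ln 2)"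
  proof -
    have "ln ((4::real) ^ Suc N) = real (Suc N) * ln 4" by (rule ln_realpow)
    moreover have "ln (4::real) = 2 * ln 2" using ln_realpow[of 2 2] by simp
    ultimately show ?thesis by simp
  qed
  ultimately have "real (Suc N) * (2 * ln 2) \<le> ln (real (Fix L))" by simp
  then have "2/3 * ln 2 \<le> ln (real (Fix L)) / real (idx L)"
    unfolding idx by (simp add: field_simps)
  then have "ereal (2/3 * ln 2) \<le> ereal (ln (real (Fix L)) / real (idx L))" by simp
  also have "\<dots> \<le> (SUP x\<in>{x. P x}. ereal (ln (real (Fix x)) / real (idx x)))"
    by (rule SUP_upper) (use PL in simp)
  finally show "ereal (2/3 * ln 2) \<le> (SUP x\<in>{x. P x}. ereal (ln (real (Fix x)) / real (idx x)))" .
qed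

lemma growth_eq: "growth = ereal (2/3 * ln 2)"
  using growth_le growth_ge by (rule antisym)



definition Gen :: "pt set \<Rightarrow> pt \<times> pt \<times> pt \<Rightarrow> bool" where
  "Gen L t \<longleftrightarrow> (\<exists>m r q :: nat. \<exists>a2 a3 b3 :: int.
     t = ((int m,0,0), (a2,int r,0), (a3,b3,int q)) \<and> m>0 \<and> r>0 \<and> q>0 \<and>
     (int m,0,0)\<in>L \<and> (a2,int r,0)\<in>L \<and> (a3,b3,int q)\<in>L \<and>
     0 \<le> a2 \<and> a2 < int m \<and> 0 \<le> a3 \<and> a3 < int m \<and> 0\<le>b3 \<and> b3< int r \<and>
     (\<forall>k a b. 0<k \<longrightarrow> k<m \<longrightarrow> (int k,a,b)\<in>L \<longrightarrow> a = 0 \<longrightarrow> b = 0 \<longrightarrow> False) \<and>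
     (\<forall>k a b. 0<k \<longrightarrow> k<r \<longrightarrow> (a,int k,b)\<in>L \<longrightarrow> b = 0 \<longrightarrow> False) \<and>
     (\<forall>k a b. 0<k \<longrightarrow> k<q \<longrightarrow> (a,b,int k)\<in>L \<longrightarrow> False) \<and>
     m*r*q \<le> idx L)"

lemma Gen_ex: "L \<in> L3 \<Longrightarrow> \<exists>t. Gen L t"
proof -
  assume L: "L \<in> L3"
  obtain m r q :: nat and a2 a3 b3 :: int where g:
  "m>0" "r>0" "q>0" "(int m,0,0)\<in>L" "(a2,int r,0)\<in>L" "(a3,b3,int q)\<in>L"
  "0 \<le> a2" "a2 < int m" "0 \<le> a3" "a3 < int m" "0\<le>b3" "b3< int r"
  "\<forall>k a b. 0<k \<longrightarrow> k<m \<longrightarrow> (int k,a,b)\<in>L \<longrightarrow> a = 0 \<longrightarrow> b = 0 \<longrightarrow> False"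
  "\<forall>k a b. 0<k \<longrightarrow> k<r \<longrightarrow> (a,int k,b)\<in>L \<longrightarrow> b = 0 \<longrightarrow> False"
  "\<forall>k a b. 0<k \<longrightarrow> k<q \<longrightarrow> (a,b,int k)\<in>L \<longrightarrow> False"
    by (rule L3_gens[OF L])
  have idx: "m*r*q \<le> idx L" using box_le_idx[OF L g(13,14,15)] .
  have "Gen L ((int m,0,0),(a2,int r,0),(a3,b3,int q))" unfolding Gen_def
    by (intro exI[of _ m] exI[of _ r] exI[of _ q] exI[of _ a2] exI[of _ a3] exI[of _ b3] conjI refl g idx)
  then show ?thesis by blast
qed

lemma mod_zero_min:
  assumes "q > 0" and mn: "\<forall>k. 0<k \<longrightarrow> k<q \<longrightarrow> P (int k) \<longrightarrow> False" and "P (z mod int q)"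
  shows "z mod int q = 0"
proof (rule ccontr)
  assume "z mod int q \<noteq> 0"
  moreover have "0 \<le> z mod int q" "z mod int q < int q" using assms(1) by simp_all
  ultimately have "0 < nat (z mod int q)" "nat (z mod int q) < q" "P (int (nat (z mod int q)))"
    using assms(3) by auto
  then show False using mn by blast
qed

lemma Gen_span:
  assumes L: "L \<in> L3" and G: "Gen L (v1,v2,v3)"
  shows "L = {smul c1 v1 + smul c2 v2 + smul c3 v3 | c1 c2 c3. True}"
proof -
  have sg: "is_subgroup3 L" using L3_sg[OF L] .
  obtain m r q :: nat and a2 a3 b3 :: int where g0:
     "(v1,v2,v3) = ((int m,0,0), (a2,int r,0), (a3,b3,int q))" and g: "m>0" "r>0" "q>0"
     "(int m,0,0)\<in>L" "(a2,int r,0)\<in>L" "(a3,b3,int q)\<in>L"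
     "0 \<le> a2" "a2 < int m" "0 \<le> a3" "a3 < int m" "0\<le>b3" "b3< int r"
     "\<forall>k a b. 0<k \<longrightarrow> k<m \<longrightarrow> (int k,a,b)\<in>L \<longrightarrow> a = 0 \<longrightarrow> b = 0 \<longrightarrow> False"
     "\<forall>k a b. 0<k \<longrightarrow> k<r \<longrightarrow> (a,int k,b)\<in>L \<longrightarrow> b = 0 \<longrightarrow> False"
     "\<forall>k a b. 0<k \<longrightarrow> k<q \<longrightarrow> (a,b,int k)\<in>L \<longrightarrow> False"
     "m*r*q \<le> idx L"
    using G unfolding Gen_def by (elim exE conjE) (rule that, assumption+)
  have gv: "v1 = (int m,0,0)" "v2 = (a2,int r,0)" "v3 = (a3,b3,int q)" using g0 by simp_all
  show ?thesis
  proof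
    show "{smul c1 v1 + smul c2 v2 + smul c3 v3 | c1 c2 c3. True} \<subseteq> L"
    proof
      fix p assume "p \<in> {smul c1 v1 + smul c2 v2 + smul c3 v3 | c1 c2 c3. True}"
      then obtain c1 c2 c3 where p: "p = smul c1 v1 + smul c2 v2 + smul c3 v3" by blast
      have "v1 \<in> L" "v2 \<in> L" "v3 \<in> L" using gv g(4-6) by simp_all
      then show "p \<in> L" unfolding p by (intro sg_add[OF sg] sg_smul[OF sg])
    qed
  next
    show "L \<subseteq> {smul c1 v1 + smul c2 v2 + smul c3 v3 | c1 c2 c3. True}"
    proof
      fix p assume p: "p \<in> L"
      obtain x y z where pe: "p = (x,y,z)" by (cases p) auto
      define c3 where "c3 = z div int q"
      define p1 where "p1 = p - smul c3 v3"
      have p1L: "p1 \<in> L" unfolding p1_def using sg_diff[OF sg p sg_smul[OF sg g(6)]] gv(3) by simp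
      define x1 y1 where "x1 = x - c3 * a3" and "y1 = y - c3 * b3"
      have p1e: "p1 = (x1, y1, z mod int q)"
        unfolding p1_def pe gv(3) c3_def x1_def y1_def by (simp add: minus_div_mult_eq_mod[symmetric] algebra_simps zero_prod_def)
      have z0: "z mod int q = 0"
        by (rule mod_zero_min[OF g(3), of "\<lambda>k. \<exists>a b. (a,b,k) \<in> L"]) (use g(15) in blast, use p1L in \<open>unfold p1e, blast\<close>)
      define c2 where "c2 = y1 div int r"
      define p2 where "p2 = p1 - smul c2 v2"
      have p2L: "p2 \<in> L" unfolding p2_def using sg_diff[OF sg p1L sg_smul[OF sg g(5)]] gv(2) by simp
      define x2 where "x2 = x1 - c2 * a2"
      have p2e: "p2 = (x2, y1 mod int r, 0)"
        unfolding p2_def p1e gv(2) c2_def x2_def z0 by (simp add: minus_div_mult_eq_mod[symmetric] algebra_simps zero_prod_def)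
      have y0: "y1 mod int r = 0"
        by (rule mod_zero_min[OF g(2), of "\<lambda>k. \<exists>a. (a,k,0) \<in> L"]) (use g(14) in blast, use p2L in \<open>unfold p2e, blast\<close>)
      define c1 where "c1 = x2 div int m"
      define p3 where "p3 = p2 - smul c1 v1"
      have p3L: "p3 \<in> L" unfolding p3_def using sg_diff[OF sg p2L sg_smul[OF sg g(4)]] gv(1) by simp
      have p3e: "p3 = (x2 mod int m, 0, 0)"
        unfolding p3_def p2e gv(1) c1_def y0 by (simp add: minus_div_mult_eq_mod[symmetric] algebra_simps zero_prod_def)
      have x0: "x2 mod int m = 0"
        by (rule mod_zero_min[OF g(1), of "\<lambda>k. (k,0,0) \<in> L"]) (use g(13) in blast, use p3L in \<open>unfold p3e, blast\<close>)
      have "p = p3 + smul c1 v1 + smul c2 v2 + smul c3 v3"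
        unfolding p3_def p2_def p1_def by simp
      also have "\<dots> = smul c1 v1 + smul c2 v2 + smul c3 v3" using p3e x0 by (simp add: zero_prod_def)
      finally show "p \<in> {smul c1 v1 + smul c2 v2 + smul c3 v3 | c1 c2 c3. True}" by blast
    qed
  qed
qed

definition boxn :: "nat \<Rightarrow> pt set" where
  "boxn n = {0..int n} \<times> {0..int n} \<times> {0..int n}"

lemma card_boxn: "card (boxn n) = (n+1)^3"
proof -
  have c: "card {0..int n} = n + 1" by simp
  show ?thesis unfolding boxn_def card_cartesian_product c by (simp add: power3_eq_cube)
qed

lemma Gen_box:
  assumes G: "Gen L (v1,v2,v3)" and n: "idx L = n"
  shows "(v1,v2,v3) \<in> boxn n \<times> boxn n \<times> boxn n"
proof -
  obtain m r q :: nat and a2 a3 b3 :: int where g0: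
     "(v1,v2,v3) = ((int m,0,0), (a2,int r,0), (a3,b3,int q))" and g: "m>0" "r>0" "q>0"
     "(int m,0,0)\<in>L" "(a2,int r,0)\<in>L" "(a3,b3,int q)\<in>L"
     "0 \<le> a2" "a2 < int m" "0 \<le> a3" "a3 < int m" "0\<le>b3" "b3< int r"
     "\<forall>k a b. 0<k \<longrightarrow> k<m \<longrightarrow> (int k,a,b)\<in>L \<longrightarrow> a = 0 \<longrightarrow> b = 0 \<longrightarrow> False"
     "\<forall>k a b. 0<k \<longrightarrow> k<r \<longrightarrow> (a,int k,b)\<in>L \<longrightarrow> b = 0 \<longrightarrow> False"
     "\<forall>k a b. 0<k \<longrightarrow> k<q \<longrightarrow> (a,b,int k)\<in>L \<longrightarrow> False"
     "m*r*q \<le> idx L"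
    using G unfolding Gen_def by (elim exE conjE) (rule that, assumption+)
  have gv: "v1 = (int m,0,0)" "v2 = (a2,int r,0)" "v3 = (a3,b3,int q)" using g0 by simp_all
  have "m \<le> m*r*q" using g(2,3) by simp
  moreover have "r \<le> m*r*q" using g(1,3) by simp
  moreover have "q \<le> m*r*q" using g(1,2) by simp
  ultimately have "m \<le> n" "r \<le> n" "q \<le> n" using g(16) n by linarith+
  then show ?thesis unfolding boxn_def gv using g(7-12) by auto
qed

lemma count_idx:
  "finite {L\<in>L3. idx L = n} \<and> card {L\<in>L3. idx L = n} \<le> (n+1)^9"
proof -
  define S where "S = {L\<in>L3. idx L = n}"
  define g where "g L = (SOME t. Gen L t)" for L
  have G: "Gen L (g L)" if "L \<in> L3" for L
    unfolding g_def using someI_ex[OF Gen_ex[OF that]] .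
  have inj: "inj_on g S"
  proof (rule inj_onI)
    fix L L' assume "L \<in> S" "L' \<in> S" "g L = g L'"
    obtain v1 v2 v3 where t: "g L = (v1,v2,v3)" by (cases "g L") auto
    have "L = {smul c1 v1 + smul c2 v2 + smul c3 v3 | c1 c2 c3. True}"
      using Gen_span[of L] G[of L] \<open>L\<in>S\<close> t unfolding S_def by auto
    moreover have "L' = {smul c1 v1 + smul c2 v2 + smul c3 v3 | c1 c2 c3. True}"
      using Gen_span[of L'] G[of L'] \<open>L'\<in>S\<close> t \<open>g L = g L'\<close> unfolding S_def by auto
    ultimately show "L = L'" by simp
  qed
  have sub: "g ` S \<subseteq> boxn n \<times> boxn n \<times> boxn n"
  proof
    fix t assume "t \<in> g ` S"
    then obtain L where L: "L \<in> S" "t = g L" by auto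
    obtain v1 v2 v3 where t: "t = (v1,v2,v3)" by (cases t) auto
    show "t \<in> boxn n \<times> boxn n \<times> boxn n"
      unfolding t by (rule Gen_box) (use G[of L] L t in \<open>auto simp: S_def\<close>)
  qed
  have fin: "finite (boxn n \<times> boxn n \<times> boxn n)" unfolding boxn_def by simp
  have "card S \<le> card (boxn n \<times> boxn n \<times> boxn n)" by (rule card_inj_on_le[OF inj sub fin])
  also have "\<dots> = (n+1)^9" by (simp add: card_cartesian_product card_boxn power_mult[symmetric])
  finally show ?thesis using inj_on_finite[OF inj sub fin] unfolding S_def by simp
qed



lemma lz_nth: "fps_nth logzeta_fps n = (\<Sum>L\<in>{L\<in>L3. idx L = n}. real (Fix L) / real (idx L))"
  by (simp add: logzeta_fps_def)

lemma lz_nonneg: "fps_nth logzeta_fps n \<ge> 0"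
  unfolding lz_nth by (intro sum_nonneg) auto

lemma Fix_le_powr:
  assumes L: "L \<in> L3" shows "real (Fix L) \<le> 2 powr (2 * real (idx L) / 3)"
proof -
  have pos: "real (Fix L) > 0" using Fix_pos[OF L] by simp
  have "ln (real (Fix L)) \<le> 2 * real (idx L) / 3 * ln 2" using Fix_le[OF L] by simp
  then have "exp (ln (real (Fix L))) \<le> exp (2 * real (idx L) / 3 * ln 2)" by simp
  then show ?thesis using pos by (simp add: powr_def)
qed

lemma lz_upper:
  assumes n: "n > 0"
  shows "fps_nth logzeta_fps n \<le> (real n + 1)^9 * 2 powr (2 * real n / 3)"
proof -
  have tm: "real (Fix L) / real (idx L) \<le> 2 powr (2 * real n / 3)" if "L \<in> {L\<in>L3. idx L = n}" for L
  proof -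
    have L: "L \<in> L3" and i: "idx L = n" using that by auto
    have "real (Fix L) / real (idx L) \<le> real (Fix L)" using i n Fix_pos[OF L]
      by (simp add: divide_le_eq)
    also have "\<dots> \<le> 2 powr (2 * real n / 3)" using Fix_le_powr[OF L] i by simp
    finally show ?thesis .
  qed
  have "fps_nth logzeta_fps n \<le> real (card {L\<in>L3. idx L = n}) * 2 powr (2 * real n / 3)"
    unfolding lz_nth by (rule sum_bounded_above) (rule tm)
  also have "\<dots> \<le> (real n + 1)^9 * 2 powr (2 * real n / 3)"
  proof (rule mult_right_mono)
    have "card {L\<in>L3. idx L = n} \<le> (n+1)^9" using count_idx by blast
    then have "real (card {L\<in>L3. idx L = n}) \<le> real ((n+1)^9)" by linarith
    then show "real (card {L\<in>L3. idx L = n}) \<le> (real n + 1)^9" by (simp add: add.commute)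
  qed simp
  finally show ?thesis .
qed

lemma lz_lower:
  assumes N: "N > 0"
  shows "fps_nth logzeta_fps (3*N) \<ge> 4^N / (3 * real N)"
proof -
  have mem: "LN N \<in> {L\<in>L3. idx L = 3*N}" using LN_L3[OF N] LN_idx[OF N] by simp
  have fin: "finite {L\<in>L3. idx L = 3*N}" using count_idx by blast
  have "real (Fix (LN N)) / real (idx (LN N)) \<le> fps_nth logzeta_fps (3*N)"
    unfolding lz_nth by (rule member_le_sum[OF mem _ fin]) auto
  moreover have "4^N / (3 * real N) \<le> real (Fix (LN N)) / real (idx (LN N))"
  proof -
    have "(4::real)^N \<le> real (Fix (LN N))" using Fix_LN[OF N]
      by (metis of_nat_le_iff of_nat_numeral of_nat_power)
    then show ?thesis using LN_idx[OF N] N by (simp add: divide_right_mono)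
  qed
  ultimately show ?thesis by linarith
qed

lemma conv_radius_poly9: "conv_radius (\<lambda>n. (real n + 1)^9) = 1"
proof (rule conv_radius_ratio_limit_nonzero[of _ 1])
  have "(\<lambda>n. ((real n + 1)^9) / ((real (Suc n) + 1)^9)) \<longlonglongrightarrow> 1"
    by real_asymp
  moreover have "(\<lambda>n. norm ((real n + 1)^9) / norm ((real (Suc n) + 1)^9)) = (\<lambda>n. ((real n + 1)^9) / ((real (Suc n) + 1)^9))"
    by (intro ext) (simp add: abs_of_nonneg)
  ultimately show "(\<lambda>n. norm ((real n + 1)^9) / norm ((real (Suc n) + 1)^9)) \<longlonglongrightarrow> 1" by simp
qed simp_all

lemma summable_poly9: "0 \<le> x \<Longrightarrow> x < 1 \<Longrightarrow> summable (\<lambda>n. (real n + 1)^9 * x^n)"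
  by (rule summable_in_conv_radius) (simp add: conv_radius_poly9)

definition rho :: real where "rho = 2 powr (-2/3)"

lemma rho_pos: "rho > 0" by (simp add: rho_def)

lemma two_powr_n: "2 powr (2 * real n / 3) = (1 / rho) ^ n"
proof -
  have "1 / rho = 2 powr (2/3)" by (simp add: rho_def powr_minus divide_simps)
  then have "(1/rho)^n = 2 powr (2/3 * real n)" by (simp add: powr_realpow[symmetric] powr_powr)
  then show ?thesis by (simp add: mult.commute)
qed

lemma lz_radius: "fps_conv_radius logzeta_fps \<ge> ereal rho"
  unfolding fps_conv_radius_def
proof (rule conv_radius_geI_ex')
  fix r assume r: "0 < r" "ereal r < ereal rho"
  then have rr: "r < rho" by simp
  define x where "x = r / rho"
  have x: "0 \<le> x" "x < 1" using r rr rho_pos unfolding x_def by auto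
  show "summable (\<lambda>n. fps_nth logzeta_fps n * of_real r ^ n)"
  proof (rule summable_comparison_test'[OF summable_poly9[OF x], of 1])
    fix n :: nat assume "1 \<le> n"
    have "norm (fps_nth logzeta_fps n * of_real r ^ n) = fps_nth logzeta_fps n * r ^ n"
      using lz_nonneg[of n] r by simp
    also have "\<dots> \<le> ((real n + 1)^9 * (1/rho)^n) * r^n"
      using lz_upper[of n] \<open>1 \<le> n\<close> r two_powr_n[of n] by (intro mult_right_mono) auto
    also have "\<dots> = (real n + 1)^9 * x^n" unfolding x_def by (simp add: power_divide)
    finally show "norm (fps_nth logzeta_fps n * of_real r ^ n) \<le> (real n + 1)^9 * x^n" .
  qed
qed



lemma pow_nonneg: "fps_nth (logzeta_fps ^ i) n \<ge> 0"
proof (induction i arbitrary: n)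
  case 0 then show ?case by simp
next
  case (Suc i)
  show ?case unfolding power_Suc fps_mult_nth
    by (intro sum_nonneg mult_nonneg_nonneg lz_nonneg Suc)
qed

lemma zeta_nth: "fps_nth zeta_fps n = (\<Sum>i=0..n. (1 / fact i) * fps_nth (logzeta_fps ^ i) n)"
  unfolding zeta_fps_def fps_compose_nth by simp

lemma zeta_nonneg: "fps_nth zeta_fps n \<ge> 0"
  unfolding zeta_nth by (intro sum_nonneg mult_nonneg_nonneg pow_nonneg) auto

lemma zeta_ge_lz: "n \<ge> 1 \<Longrightarrow> fps_nth zeta_fps n \<ge> fps_nth logzeta_fps n"
proof -
  assume n: "n \<ge> 1"
  have "(1 / fact 1) * fps_nth (logzeta_fps ^ 1) n \<le> (\<Sum>i=0..n. (1 / fact i) * fps_nth (logzeta_fps ^ i) n)"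
    by (rule member_le_sum) (use n in \<open>auto intro!: divide_nonneg_nonneg pow_nonneg\<close>)
  then show ?thesis unfolding zeta_nth by simp
qed

lemma rho_cube: "rho ^ 3 = 1/4"
proof -
  have "rho ^ 3 = rho powr (real 3)" using rho_pos by (simp add: powr_realpow)
  also have "\<dots> = 2 powr (-2)" unfolding rho_def by (simp add: powr_powr)
  also have "\<dots> = 1/4" by (simp add: powr_minus)
  finally show ?thesis .
qed

lemma zeta_not_summable:
  assumes r: "r > rho"
  shows "\<not> summable (\<lambda>n. fps_nth zeta_fps n * r ^ n)"
proof
  assume s: "summable (\<lambda>n. fps_nth zeta_fps n * r ^ n)"
  define f where "f n = fps_nth zeta_fps n * r ^ n" for n
  have "f \<longlonglongrightarrow> 0" unfolding f_def using summable_LIMSEQ_zero[OF s] .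
  then have "(f \<circ> (\<lambda>N. 3 * N)) \<longlonglongrightarrow> 0"
    by (rule LIMSEQ_subseq_LIMSEQ) (auto simp: strict_mono_def)
  then have ev1: "eventually (\<lambda>N. f (3*N) < 1) sequentially"
    using order_tendstoD(2)[of "f \<circ> (\<lambda>N. 3 * N)" 0 sequentially 1] by simp
  define c where "c = 4 * r^3"
  have rpos: "r > 0" using r rho_pos by linarith
  have "rho ^ 3 < r ^ 3" using r rho_pos by (intro power_strict_mono) auto
  then have c1: "c > 1" unfolding c_def rho_cube by simp
  have "filterlim (\<lambda>N. c ^ N / (3 * real N)) at_top at_top" using c1 by real_asymp
  then have ev2: "eventually (\<lambda>N. c ^ N / (3 * real N) \<ge> 1) sequentially"
    by (simp add: filterlim_at_top)
  have ev3: "eventually (\<lambda>N. f (3*N) \<ge> c ^ N / (3 * real N)) sequentially"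
    using eventually_ge_at_top[of 1]
  proof eventually_elim
    case (elim N)
    then have N: "N > 0" by simp
    have "c ^ N / (3 * real N) = (4^N / (3 * real N)) * r ^ (3*N)"
      unfolding c_def by (simp add: power_mult_distrib power_mult)
    also have "\<dots> \<le> fps_nth logzeta_fps (3*N) * r ^ (3*N)"
      using lz_lower[OF N] rpos by (intro mult_right_mono) auto
    also have "\<dots> \<le> fps_nth zeta_fps (3*N) * r ^ (3*N)"
      using zeta_ge_lz[of "3*N"] N rpos by (intro mult_right_mono) auto
    finally show ?case unfolding f_def .
  qed
  have "eventually (\<lambda>N. False) sequentially"
    using ev1 ev2 ev3 by eventually_elim linarith
  then show False by simp
qed

lemma exp_partial: "(0::real) \<le> A \<Longrightarrow> (\<Sum>i<M. (1 / fact i) * A ^ i) \<le> exp A"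
proof -
  assume A: "0 \<le> A"
  have s: "(\<lambda>n. A^n /\<^sub>R fact n) sums exp A" by (rule exp_converges)
  have "(\<Sum>i<M. A^i /\<^sub>R fact i) \<le> exp A"
    using sum_le_suminf[OF sums_summable[OF s], of "{..<M}"] sums_unique[OF s] A by auto
  then show ?thesis by (simp add: divide_inverse mult.commute)
qed

lemma zeta_summable:
  assumes r: "0 < r" "r < rho"
  shows "summable (\<lambda>n. fps_nth zeta_fps n * r ^ n)"
proof -
  define lz where "lz = logzeta_fps"
  define A where "A = eval_fps lz r"
  have "ereal (norm r) < ereal rho" using r by simp
  then have rad: "ereal (norm r) < fps_conv_radius lz" unfolding lz_def by (rule less_le_trans[OF _ lz_radius])
  have hs: "summable (\<lambda>n. fps_nth (lz^i) n * r^n)" for i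
  proof (rule summable_in_conv_radius)
    have "fps_conv_radius lz \<le> fps_conv_radius (lz^i)" by (rule fps_conv_radius_power)
    then show "ereal (norm r) < conv_radius (fps_nth (lz^i))"
      using rad unfolding fps_conv_radius_def by simp
  qed
  have hv: "(\<Sum>n. fps_nth (lz^i) n * r^n) = A^i" for i
    using eval_fps_power[OF rad] unfolding A_def eval_fps_def .
  have nn: "0 \<le> fps_nth (lz^i) n * r^n" for i n using pow_nonneg[of i n] r unfolding lz_def by simp
  have part: "(\<Sum>n<M. fps_nth (lz^i) n * r^n) \<le> A^i" for i M
    using sum_le_suminf[OF hs[of i], of "{..<M}"] nn hv[of i] by simp
  have A0: "0 \<le> A" using hv[of 1] suminf_nonneg[OF hs[of 1] nn[of 1]] by simp
  show ?thesis
  proof (rule summableI_nonneg_bounded)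
    fix n show "0 \<le> fps_nth zeta_fps n * r ^ n" using zeta_nonneg[of n] r by simp
  next
    fix M
    have "(\<Sum>n<M. fps_nth zeta_fps n * r ^ n) = (\<Sum>n<M. \<Sum>i=0..n. (1 / fact i) * (fps_nth (lz^i) n * r^n))"
      unfolding zeta_nth lz_def by (simp add: sum_distrib_right mult.assoc)
    also have "\<dots> \<le> (\<Sum>n<M. \<Sum>i<M. (1 / fact i) * (fps_nth (lz^i) n * r^n))"
    proof (rule sum_mono)
      fix n assume "n \<in> {..<M}"
      then show "(\<Sum>i=0..n. (1 / fact i) * (fps_nth (lz^i) n * r^n)) \<le> (\<Sum>i<M. (1 / fact i) * (fps_nth (lz^i) n * r^n))"
        by (intro sum_mono2) (auto intro!: divide_nonneg_nonneg nn)
    qed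
    also have "\<dots> = (\<Sum>i<M. (1 / fact i) * (\<Sum>n<M. fps_nth (lz^i) n * r^n))"
      by (subst sum.swap) (simp add: sum_distrib_left)
    also have "\<dots> \<le> (\<Sum>i<M. (1 / fact i) * A ^ i)"
      by (intro sum_mono mult_left_mono part) auto
    also have "\<dots> \<le> exp A" by (rule exp_partial[OF A0])
    finally show "(\<Sum>n<M. fps_nth zeta_fps n * r ^ n) \<le> exp A" .
  qed
qed

lemma zeta_radius: "conv_radius (fps_nth zeta_fps) = ereal rho"
proof (rule antisym)
  show "conv_radius (fps_nth zeta_fps) \<le> ereal rho"
  proof (rule conv_radius_leI_ex')
    show "0 \<le> ereal rho" using rho_pos by simp
  next
    fix r assume "0 < r" "ereal rho < ereal r"
    then show "\<not> summable (\<lambda>n. fps_nth zeta_fps n * of_real r ^ n)"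
      using zeta_not_summable[of r] by simp
  qed
next
  show "ereal rho \<le> conv_radius (fps_nth zeta_fps)"
  proof (rule conv_radius_geI_ex')
    fix r assume "0 < r" "ereal r < ereal rho"
    then show "summable (\<lambda>n. fps_nth zeta_fps n * of_real r ^ n)"
      using zeta_summable[of r] by simp
  qed
qed

theorem mainTheorem11:
  shows "growth = ereal (2/3 * ln 2) \<and> conv_radius (fps_nth zeta_fps) = ereal (2 powr (-2/3))"
  using growth_eq zeta_radius unfolding rho_def by simp


end
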